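(* For any Loomis-Whitney query $Q$, $\mathsf{w}(\widehat Q)=\frac32$, where $\widehat Q$ is the multivariate extension of $Q$.
   Context: A Loomis-Whitney query of degree $k\ge3$ has variables $X_1,\dots,X_k$ and $k$ atoms $R_1,\dots,R_k$, where the schema of $R_i$ consists of all variables except $X_i$ (e.g., the triangle query $R(A,B)\wedge S(B,C)\wedge T(A,C)$ for $k=3$). Multivariate extension of $Q=R_1(\mathbf X_1)\wedge\cdots\wedge R_k(\mathbf X_k)$: take fresh variables $Z_1,\dots,Z_k$. For a permutation $\sigma$ of $[k]$, the component $\widehat Q_\sigma$ replaces each atom $R_{\sigma_i}(\mathbf X_{\sigma_i})$ by $\widehat R_{\sigma_i}(Z_1,\dots,Z_i,\mathbf X_{\sigma_i})$; $\widehat Q$ is the union of all components. Fractional hypertree width $\mathsf{w}(P)$ of a query $P$: minimum over tree decompositions of $P$ (trees with bags of variables covering every atom schema, the bags containing any variable forming a connected subtree) of the maximum over bags $B$ of the fractional edge cover number of $P$ restricted to $B$ (each atom schema intersected with $B$). For a union of queries, $\mathsf{w}$ is the maximum over the queries. *)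

theory Defs
  imports Complex_Main "HOL-Combinatorics.Permutations"
begin

text \<open>A conjunctive query is represented by the list of its atom schemas
(sets of variables). Relation names play no role in the fractional hypertree width.\<close>

type_synonym 'v query = "'v set list"

definition qvars :: "'v query \<Rightarrow> 'v set" where
  "qvars P = \<Union> (set P)"

definition adj_in :: "('n \<times> 'n) set \<Rightarrow> 'n set \<Rightarrow> ('n \<times> 'n) set" where
  "adj_in E S = {(a, b). a \<in> S \<and> b \<in> S \<and> ((a, b) \<in> E \<or> (b, a) \<in> E)}"

definition connected_in :: "('n \<times> 'n) set \<Rightarrow> 'n set \<Rightarrow> bool" where
  "connected_in E S \<longleftrightarrow> (\<forall>a\<in>S. \<forall>b\<in>S. (a, b) \<in> (adj_in E S)\<^sup>*)"

text \<open>An (undirected) tree on node set N with edges E (given as ordered pairs,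
read as undirected edges): finite, nonempty, connected, loop-free, and with
exactly |N|-1 undirected edges.\<close>

definition is_tree :: "'n set \<Rightarrow> ('n \<times> 'n) set \<Rightarrow> bool" where
  "is_tree N E \<longleftrightarrow> finite N \<and> N \<noteq> {} \<and> E \<subseteq> N \<times> N \<and> (\<forall>(a, b)\<in>E. a \<noteq> b)
     \<and> connected_in E N \<and> card {{a, b} | a b. (a, b) \<in> E} = card N - 1"

definition is_tree_decomp ::
  "'v query \<Rightarrow> nat set \<Rightarrow> (nat \<times> nat) set \<Rightarrow> (nat \<Rightarrow> 'v set) \<Rightarrow> bool" where
  "is_tree_decomp P N E B \<longleftrightarrow> is_tree N E
     \<and> (\<forall>t\<in>N. B t \<subseteq> qvars P)
     \<and> (\<forall>e\<in>set P. \<exists>t\<in>N. e \<subseteq> B t)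
     \<and> (\<forall>x. connected_in E {t \<in> N. x \<in> B t})"

definition frac_edge_cover :: "'v query \<Rightarrow> 'v set \<Rightarrow> real" where
  "frac_edge_cover P S = Inf {(\<Sum>i<length P. w i) | w :: nat \<Rightarrow> real.
      (\<forall>i<length P. 0 \<le> w i) \<and>
      (\<forall>x\<in>S. 1 \<le> (\<Sum>i\<in>{i. i < length P \<and> x \<in> P ! i \<inter> S}. w i))}"

definition td_width :: "'v query \<Rightarrow> nat set \<Rightarrow> (nat \<Rightarrow> 'v set) \<Rightarrow> real" where
  "td_width P N B = Max ((\<lambda>t. frac_edge_cover P (B t)) ` N)"

definition fhw :: "'v query \<Rightarrow> real" where
  "fhw P = Inf {td_width P N B | N E B. is_tree_decomp P N E B}"

definition fhw_union :: "'v query set \<Rightarrow> real" where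
  "fhw_union U = Max (fhw ` U)"

datatype var = X nat | Z nat

definition LW_atom :: "nat \<Rightarrow> nat \<Rightarrow> var set" where
  "LW_atom k i = {X j | j. j \<in> {1..k} \<and> j \<noteq> i}"

definition LW_query :: "nat \<Rightarrow> var query" where
  "LW_query k = map (LW_atom k) [1..<k+1]"

definition mv_component :: "nat \<Rightarrow> (nat \<Rightarrow> var set) \<Rightarrow> (nat \<Rightarrow> nat) \<Rightarrow> var query" where
  "mv_component k A \<sigma> = map (\<lambda>i. {Z j | j. j \<in> {1..i}} \<union> A (\<sigma> i)) [1..<k+1]"

definition mv_extension :: "nat \<Rightarrow> (nat \<Rightarrow> var set) \<Rightarrow> var query set" where
  "mv_extension k A = {mv_component k A \<sigma> | \<sigma>. \<sigma> permutes {1..k}}"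

end

theory Submission
  imports Defs
begin


definition edges_in :: "('n \<times> 'n) set \<Rightarrow> 'n set \<Rightarrow> 'n set set" where
  "edges_in E W = {{a, b} | a b. (a, b) \<in> E \<and> a \<in> W \<and> b \<in> W}"

lemma edges_in_mem: "e \<in> edges_in E W \<longleftrightarrow> (\<exists>a b. e = {a, b} \<and> (a, b) \<in> E) \<and> e \<subseteq> W"
  unfolding edges_in_def by blast

lemma edges_in_finite: "finite W \<Longrightarrow> finite (edges_in E W)"
proof -
  assume "finite W"
  have "edges_in E W \<subseteq> (\<lambda>(a, b). {a, b}) ` (W \<times> W)"
  proof
    fix e assume "e \<in> edges_in E W"
    then obtain a b where ab: "e = {a, b}" "a \<in> W" "b \<in> W" unfolding edges_in_def by blast
    hence "e = (\<lambda>(a, b). {a, b}) (a, b)" "(a, b) \<in> W \<times> W" by auto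
    thus "e \<in> (\<lambda>(a, b). {a, b}) ` (W \<times> W)" by (rule image_eqI)
  qed
  thus ?thesis using \<open>finite W\<close> finite_subset by blast
qed

lemma edges_in_mono: "S \<subseteq> W \<Longrightarrow> edges_in E S \<subseteq> edges_in E W"
  unfolding edges_in_def by blast

lemma edges_in_Int: "edges_in E S \<inter> edges_in E T = edges_in E (S \<inter> T)"
proof (rule set_eqI)
  fix e show "e \<in> edges_in E S \<inter> edges_in E T \<longleftrightarrow> e \<in> edges_in E (S \<inter> T)"
    unfolding Int_iff edges_in_mem by blast
qed

lemma edges_in_sub: "e \<in> edges_in E W \<Longrightarrow> e \<subseteq> W"
  unfolding edges_in_def by auto

lemma edges_inI: "(a, b) \<in> E \<Longrightarrow> a \<in> W \<Longrightarrow> b \<in> W \<Longrightarrow> {a, b} \<in> edges_in E W"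
  unfolding edges_in_def by blast

lemma edges_inI': "(b, a) \<in> E \<Longrightarrow> a \<in> W \<Longrightarrow> b \<in> W \<Longrightarrow> {a, b} \<in> edges_in E W"
  using edges_inI[of b a E W] by (simp add: insert_commute)

lemma diff_split: "A \<subseteq> B \<Longrightarrow> B \<subseteq> C \<Longrightarrow> C - A = (C - B) \<union> (B - A)"
  by blast

lemma edges_in_empty: "edges_in E {} = {}"
  unfolding edges_in_def by auto

lemma boundary:
  assumes "(a, b) \<in> R\<^sup>*" "a \<in> S" "b \<notin> S"
  shows "\<exists>u v. u \<in> S \<and> v \<notin> S \<and> (u, v) \<in> R"
  using assms
proof (induction rule: rtrancl_induct)
  case base thus ?case by simp
next
  case (step y z)
  then show ?case by (cases "y \<in> S") auto
qed

lemma L1':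
  assumes "finite W" "connected_in E W"
  shows "S \<subseteq> W \<Longrightarrow> S \<noteq> {} \<Longrightarrow> card W - card S \<le> card (edges_in E W - edges_in E S)"
proof (induction "card W - card S" arbitrary: S rule: less_induct)
  case less
  show ?case
  proof (cases "S = W")
    case True thus ?thesis by simp
  next
    case False
    then obtain w where w: "w \<in> W" "w \<notin> S" using less.prems by blast
    obtain s where s: "s \<in> S" using less.prems by blast
    have "(s, w) \<in> (adj_in E W)\<^sup>*" using assms(2) w s less.prems
      unfolding connected_in_def by blast
    then obtain u v where uv: "u \<in> S" "v \<notin> S" "(u, v) \<in> adj_in E W"
      using boundary[of s w _ S] s w by blast
    have vW: "v \<in> W" "u \<in> W" using uv(3) unfolding adj_in_def by auto
    define S' where "S' = insert v S"
    have fS: "finite S" using less.prems assms(1) finite_subset by blast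
    have cS': "card S' = card S + 1" unfolding S'_def using fS uv(2) by simp
    have sub: "S' \<subseteq> W" unfolding S'_def using vW less.prems by blast
    have "card S' \<le> card W" using sub assms(1) card_mono by blast
    hence lt: "card W - card S' < card W - card S" using cS' by simp
    have IH: "card W - card S' \<le> card (edges_in E W - edges_in E S')"
      using less.hyps[OF lt sub] unfolding S'_def by blast
    have new: "{u, v} \<in> edges_in E S' - edges_in E S"
    proof
      have "u \<in> S'" "v \<in> S'" unfolding S'_def using uv(1) by auto
      moreover have "(u, v) \<in> E \<or> (v, u) \<in> E" using uv(3) unfolding adj_in_def by auto
      ultimately show "{u, v} \<in> edges_in E S'"
        using edges_inI edges_inI' by metis
      show "{u, v} \<notin> edges_in E S"
        using uv(2) edges_in_sub[of "{u, v}" E S] by blast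
    qed
    have split: "edges_in E W - edges_in E S =
       (edges_in E W - edges_in E S') \<union> (edges_in E S' - edges_in E S)"
      by (rule diff_split) (use edges_in_mono[OF sub, of E] edges_in_mono[of S S' E] in \<open>auto simp: S'_def\<close>)
    have fin: "finite (edges_in E W)" using edges_in_finite assms(1) by blast
    have fin2: "finite (edges_in E S' - edges_in E S)"
      using edges_in_finite[of S' E] sub assms(1) finite_subset by blast
    have "card (edges_in E W - edges_in E S) =
      card (edges_in E W - edges_in E S') + card (edges_in E S' - edges_in E S)"
      unfolding split by (rule card_Un_disjoint) (use fin fin2 in auto)
    moreover have "card (edges_in E S' - edges_in E S) \<ge> 1"
      using new fin2 by (metis One_nat_def Suc_leI card_gt_0_iff empty_iff)
    ultimately show ?thesis using IH cS' by linarith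
  qed
qed

lemma L1:
  assumes "finite T" "connected_in E T" "T \<noteq> {}"
  shows "card T \<le> card (edges_in E T) + 1"
proof -
  obtain v where v: "v \<in> T" using assms by blast
  have "card T - card {v} \<le> card (edges_in E T - edges_in E {v})"
    using L1'[OF assms(1,2), of "{v}"] v by blast
  moreover have "card (edges_in E T - edges_in E {v}) \<le> card (edges_in E T)"
    by (rule card_mono) (auto simp: edges_in_finite assms(1))
  ultimately show ?thesis by simp
qed

lemma tree_edges: "is_tree N E \<Longrightarrow> card (edges_in E N) = card N - 1"
proof -
  assume t: "is_tree N E"
  hence "E \<subseteq> N \<times> N" unfolding is_tree_def by blast
  hence "{{a, b} | a b. (a, b) \<in> E} = edges_in E N" unfolding edges_in_def by blast
  thus ?thesis using t unfolding is_tree_def by simp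
qed

lemma F:
  assumes t: "is_tree N E" and S: "S \<subseteq> N" "S \<noteq> {}"
  shows "card (edges_in E S) + 1 \<le> card S"
proof -
  have fN: "finite N" "connected_in E N" using t unfolding is_tree_def by auto
  have a: "card N - card S \<le> card (edges_in E N - edges_in E S)"
    using L1'[OF fN S] .
  have fin: "finite (edges_in E N)" using edges_in_finite fN by blast
  have b: "card (edges_in E N) = card (edges_in E N - edges_in E S) + card (edges_in E S)"
    using card_Diff_subset[OF finite_subset[OF edges_in_mono[OF S(1)] fin] edges_in_mono[OF S(1)]]
      card_mono[OF fin edges_in_mono[OF S(1)]] by simp
  have c: "card S \<le> card N" "card S \<ge> 1"
    using card_mono[OF fN(1) S(1)] S fN(1) finite_subset
    by (auto simp: Suc_le_eq card_gt_0_iff)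
  show ?thesis using a b c tree_edges[OF t] by linarith
qed

lemma incl_excl3:
  assumes "finite A" "finite B" "finite C"
  shows "int (card (A \<union> B \<union> C)) = int (card A) + card B + card C - card (A \<inter> B)
     - card (A \<inter> C) - card (B \<inter> C) + card (A \<inter> B \<inter> C)"
proof -
  have 1: "card (A \<union> B) + card (A \<inter> B) = card A + card B"
    using card_Un_Int[OF assms(1,2)] by simp
  have 2: "card ((A \<union> B) \<union> C) + card ((A \<union> B) \<inter> C) = card (A \<union> B) + card C"
    using card_Un_Int[of "A \<union> B" C] assms by simp
  have 3: "card ((A \<inter> C) \<union> (B \<inter> C)) + card ((A \<inter> C) \<inter> (B \<inter> C)) = card (A \<inter> C) + card (B \<inter> C)"
    using card_Un_Int[of "A \<inter> C" "B \<inter> C"] assms by simp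
  have e1: "(A \<union> B) \<inter> C = (A \<inter> C) \<union> (B \<inter> C)" by blast
  have e2: "(A \<inter> C) \<inter> (B \<inter> C) = A \<inter> B \<inter> C" by blast
  show ?thesis using 1 2 3 unfolding e1 e2 by linarith
qed

lemma helly3:
  assumes t: "is_tree N E"
    and sub: "T1 \<subseteq> N" "T2 \<subseteq> N" "T3 \<subseteq> N"
    and con: "connected_in E T1" "connected_in E T2" "connected_in E T3"
    and ne: "T1 \<inter> T2 \<noteq> {}" "T1 \<inter> T3 \<noteq> {}" "T2 \<inter> T3 \<noteq> {}"
  shows "T1 \<inter> T2 \<inter> T3 \<noteq> {}"
proof
  assume empty: "T1 \<inter> T2 \<inter> T3 = {}"
  have fN: "finite N" using t unfolding is_tree_def by auto
  have f: "finite T1" "finite T2" "finite T3"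
    using finite_subset[OF sub(1) fN] finite_subset[OF sub(2) fN] finite_subset[OF sub(3) fN] by auto
  let ?U = "T1 \<union> T2 \<union> T3"
  have U: "?U \<subseteq> N" "?U \<noteq> {}" using sub ne by auto
  have FU: "card (edges_in E ?U) + 1 \<le> card ?U" using F[OF t U] .
  have l1: "card T1 \<le> card (edges_in E T1) + 1" using L1[OF f(1) con(1)] ne by blast
  have l2: "card T2 \<le> card (edges_in E T2) + 1" using L1[OF f(2) con(2)] ne by blast
  have l3: "card T3 \<le> card (edges_in E T3) + 1" using L1[OF f(3) con(3)] ne by blast
  have u12: "card (edges_in E (T1 \<inter> T2)) + 1 \<le> card (T1 \<inter> T2)" using F[OF t _ ne(1)] sub by blast
  have u13: "card (edges_in E (T1 \<inter> T3)) + 1 \<le> card (T1 \<inter> T3)" using F[OF t _ ne(2)] sub by blast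
  have u23: "card (edges_in E (T2 \<inter> T3)) + 1 \<le> card (T2 \<inter> T3)" using F[OF t _ ne(3)] sub by blast
  have fe: "finite (edges_in E T1)" "finite (edges_in E T2)" "finite (edges_in E T3)"
    using f edges_in_finite by auto
  have ie: "int (card (edges_in E T1 \<union> edges_in E T2 \<union> edges_in E T3)) =
     int (card (edges_in E T1)) + card (edges_in E T2) + card (edges_in E T3)
     - card (edges_in E (T1 \<inter> T2)) - card (edges_in E (T1 \<inter> T3)) - card (edges_in E (T2 \<inter> T3))"
    using incl_excl3[OF fe] by (simp add: edges_in_Int empty edges_in_empty)
  have iv: "int (card ?U) = int (card T1) + card T2 + card T3 - card (T1 \<inter> T2)
     - card (T1 \<inter> T3) - card (T2 \<inter> T3)"
    using incl_excl3[OF f] by (simp add: empty)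
  have "edges_in E T1 \<union> edges_in E T2 \<union> edges_in E T3 \<subseteq> edges_in E ?U"
    using edges_in_mono[of _ ?U E] by blast
  hence "card (edges_in E T1 \<union> edges_in E T2 \<union> edges_in E T3) \<le> card (edges_in E ?U)"
    using card_mono edges_in_finite U fN finite_subset by metis
  thus False using FU l1 l2 l3 u12 u13 u23 ie iv by linarith
qed



lemma fec_ub:
  assumes "\<forall>i<length P. 0 \<le> w i"
    and "\<forall>x\<in>S. 1 \<le> (\<Sum>i\<in>{i. i < length P \<and> x \<in> P ! i \<inter> S}. w i)"
  shows "frac_edge_cover P S \<le> (\<Sum>i<length P. w i)"
  unfolding frac_edge_cover_def
proof (rule cInf_lower)
  show "(\<Sum>i<length P. w i) \<in> {(\<Sum>i<length P. w i) | w :: nat \<Rightarrow> real.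
      (\<forall>i<length P. 0 \<le> w i) \<and>
      (\<forall>x\<in>S. 1 \<le> (\<Sum>i\<in>{i. i < length P \<and> x \<in> P ! i \<inter> S}. w i))}"
    using assms by blast
  show "bdd_below {(\<Sum>i<length P. w i) | w :: nat \<Rightarrow> real.
      (\<forall>i<length P. 0 \<le> w i) \<and>
      (\<forall>x\<in>S. 1 \<le> (\<Sum>i\<in>{i. i < length P \<and> x \<in> P ! i \<inter> S}. w i))}"
    by (rule bdd_belowI[of _ 0]) (auto intro: sum_nonneg)
qed

lemma fec_lb:
  assumes "S \<subseteq> qvars P"
    and "\<And>w. \<forall>i<length P. 0 \<le> w i \<Longrightarrow>
      \<forall>x\<in>S. 1 \<le> (\<Sum>i\<in>{i. i < length P \<and> x \<in> P ! i \<inter> S}. w i) \<Longrightarrow> c \<le> (\<Sum>i<length P. w i)"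
  shows "c \<le> frac_edge_cover P S"
  unfolding frac_edge_cover_def
proof (rule cInf_greatest)
  have "\<forall>x\<in>S. 1 \<le> (\<Sum>i\<in>{i. i < length P \<and> x \<in> P ! i \<inter> S}. (1::real))"
  proof
    fix x assume x: "x \<in> S"
    from x assms(1) obtain A where A: "A \<in> set P" "x \<in> A" unfolding qvars_def by blast
    then obtain i where "i < length P" "P ! i = A" by (auto simp: in_set_conv_nth)
    hence "i < length P" "x \<in> P ! i" using A by auto
    hence "i \<in> {i. i < length P \<and> x \<in> P ! i \<inter> S}" using x by auto
    moreover have "finite {i. i < length P \<and> x \<in> P ! i \<inter> S}" by simp
    ultimately have "card {i. i < length P \<and> x \<in> P ! i \<inter> S} \<ge> 1"
      by (metis One_nat_def Suc_leI card_gt_0_iff empty_iff)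
    thus "1 \<le> (\<Sum>i\<in>{i. i < length P \<and> x \<in> P ! i \<inter> S}. (1::real))" by simp
  qed
  hence "\<exists>w::nat \<Rightarrow> real. (\<forall>i<length P. 0 \<le> w i) \<and>
      (\<forall>x\<in>S. 1 \<le> (\<Sum>i\<in>{i. i < length P \<and> x \<in> P ! i \<inter> S}. w i))"
    by (intro exI[of _ "\<lambda>_. 1"]) simp
  thus "{(\<Sum>i<length P. w i) | w :: nat \<Rightarrow> real.
      (\<forall>i<length P. 0 \<le> w i) \<and>
      (\<forall>x\<in>S. 1 \<le> (\<Sum>i\<in>{i. i < length P \<and> x \<in> P ! i \<inter> S}. w i))} \<noteq> {}"
    by blast
next
  fix y assume "y \<in> {(\<Sum>i<length P. w i) | w :: nat \<Rightarrow> real.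
      (\<forall>i<length P. 0 \<le> w i) \<and>
      (\<forall>x\<in>S. 1 \<le> (\<Sum>i\<in>{i. i < length P \<and> x \<in> P ! i \<inter> S}. w i))}"
  thus "c \<le> y" using assms(2) by blast
qed

lemma sum_two_le:
  assumes "finite I" "a \<in> I" "b \<in> I" "a \<noteq> b" "\<And>i. i \<in> I \<Longrightarrow> 0 \<le> (w i :: real)"
  shows "w a + w b \<le> sum w I"
proof -
  have "sum w {a, b} \<le> sum w I" by (rule sum_mono2) (use assms in auto)
  thus ?thesis using assms(4) by simp
qed

lemma sum_sub_le:
  assumes "finite J" "I \<subseteq> J" "\<And>i. i \<in> J \<Longrightarrow> 0 \<le> (w i :: real)"
  shows "sum w I \<le> sum w J"
  by (rule sum_mono2) (use assms in auto)

context
  fixes k :: nat and \<sigma> :: "nat \<Rightarrow> nat"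
  assumes k3: "k \<ge> 3" and perm: "\<sigma> permutes {1..k}"
begin

abbreviation "PP \<equiv> mv_component k (LW_atom k) \<sigma>"

lemma len: "length PP = k"
  unfolding mv_component_def by simp

lemma nthP: "i < k \<Longrightarrow> PP ! i = {Z j | j. j \<in> {1..i+1}} \<union> LW_atom k (\<sigma> (i+1))"
  unfolding mv_component_def by (simp add: nth_map del: upt_Suc)

lemma Zmem: "i < k \<Longrightarrow> Z j \<in> PP ! i \<longleftrightarrow> 1 \<le> j \<and> j \<le> i + 1"
  by (simp add: nthP LW_atom_def)

lemma Xmem: "i < k \<Longrightarrow> X j \<in> PP ! i \<longleftrightarrow> 1 \<le> j \<and> j \<le> k \<and> j \<noteq> \<sigma> (i + 1)"
  by (auto simp: nthP LW_atom_def)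

lemma sig_in: "i \<in> {1..k} \<Longrightarrow> \<sigma> i \<in> {1..k}"
  using permutes_in_image[OF perm] by blast

lemma sig_inj: "i \<in> {1..k} \<Longrightarrow> j \<in> {1..k} \<Longrightarrow> \<sigma> i = \<sigma> j \<Longrightarrow> i = j"
  using perm permutes_inj by (metis injD)

lemma inQ: "i < k \<Longrightarrow> x \<in> PP ! i \<Longrightarrow> x \<in> qvars PP"
  unfolding qvars_def using nth_mem[of i PP] len by auto

lemma X_in_q: "1 \<le> j \<Longrightarrow> j \<le> k \<Longrightarrow> X j \<in> qvars PP"
proof (cases "j = \<sigma> k")
  case True
  assume j: "1 \<le> j" "j \<le> k"
  have "\<sigma> 1 \<noteq> \<sigma> k" using sig_inj[of 1 k] k3 by auto
  hence "X j \<in> PP ! 0" using Xmem[of 0 j] k3 j True by auto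
  thus ?thesis using inQ[of 0] k3 by auto
next
  case False
  assume j: "1 \<le> j" "j \<le> k"
  have k1: "k - 1 < k" using k3 by simp
  have "X j \<in> PP ! (k - 1)" using Xmem[OF k1, of j] k3 j False by auto
  thus ?thesis using inQ[OF k1] by auto
qed

lemma Z_in_q: "1 \<le> j \<Longrightarrow> j \<le> k \<Longrightarrow> Z j \<in> qvars PP"
proof -
  assume j: "1 \<le> j" "j \<le> k"
  have k1: "k - 1 < k" using k3 by simp
  have "Z j \<in> PP ! (k - 1)" using Zmem[OF k1, of j] k3 j by auto
  thus ?thesis using inQ[OF k1] by auto
qed

lemma fec_three:
  assumes S: "S \<subseteq> qvars PP" and m: "Z (k - 1) \<in> S" "X (\<sigma> k) \<in> S" "X (\<sigma> (k - 1)) \<in> S"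
  shows "3 / 2 \<le> frac_edge_cover PP S"
proof (rule fec_lb[OF S])
  fix w :: "nat \<Rightarrow> real"
  assume nn: "\<forall>i<length PP. 0 \<le> w i"
    and feas: "\<forall>x\<in>S. 1 \<le> (\<Sum>i\<in>{i. i < length PP \<and> x \<in> PP ! i \<inter> S}. w i)"
  have nn': "\<And>i. i \<in> {..<k} \<Longrightarrow> 0 \<le> w i" using nn len by auto
  have f1: "1 \<le> (\<Sum>i\<in>{i. i < k \<and> Z (k - 1) \<in> PP ! i \<inter> S}. w i)" using feas m len by auto
  have f2: "1 \<le> (\<Sum>i\<in>{i. i < k \<and> X (\<sigma> k) \<in> PP ! i \<inter> S}. w i)" using feas m len by auto
  have f3: "1 \<le> (\<Sum>i\<in>{i. i < k \<and> X (\<sigma> (k - 1)) \<in> PP ! i \<inter> S}. w i)" using feas m len by auto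
  have s1: "{i. i < k \<and> Z (k - 1) \<in> PP ! i \<inter> S} \<subseteq> {k - 2, k - 1}"
  proof
    fix i assume "i \<in> {i. i < k \<and> Z (k - 1) \<in> PP ! i \<inter> S}"
    hence "i < k" "Z (k - 1) \<in> PP ! i" by auto
    hence "i < k" "k - 1 \<le> i + 1" using Zmem by auto
    thus "i \<in> {k - 2, k - 1}" by auto
  qed
  have s2: "{i. i < k \<and> X (\<sigma> k) \<in> PP ! i \<inter> S} \<subseteq> {..<k} - {k - 1}"
  proof
    fix i assume "i \<in> {i. i < k \<and> X (\<sigma> k) \<in> PP ! i \<inter> S}"
    hence "i < k" "X (\<sigma> k) \<in> PP ! i" by auto
    hence "i < k" "\<sigma> k \<noteq> \<sigma> (i + 1)" using Xmem by auto
    thus "i \<in> {..<k} - {k - 1}" by auto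
  qed
  have s3: "{i. i < k \<and> X (\<sigma> (k - 1)) \<in> PP ! i \<inter> S} \<subseteq> {..<k} - {k - 2}"
  proof
    fix i assume "i \<in> {i. i < k \<and> X (\<sigma> (k - 1)) \<in> PP ! i \<inter> S}"
    hence "i < k" "X (\<sigma> (k - 1)) \<in> PP ! i" by auto
    hence "i < k" "\<sigma> (k - 1) \<noteq> \<sigma> (i + 1)" using Xmem by auto
    moreover have "i \<noteq> k - 2"
    proof
      assume "i = k - 2"
      hence "i + 1 = k - 1" using k3 by simp
      thus False using \<open>\<sigma> (k - 1) \<noteq> \<sigma> (i + 1)\<close> by simp
    qed
    ultimately show "i \<in> {..<k} - {k - 2}" by auto
  qed
  have a1: "(\<Sum>i\<in>{i. i < k \<and> Z (k - 1) \<in> PP ! i \<inter> S}. w i) \<le> sum w {k - 2, k - 1}"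
    by (rule sum_sub_le[OF _ s1]) (use nn' k3 in auto)
  have a1': "sum w {k - 2, k - 1} = w (k - 2) + w (k - 1)" using k3 by simp
  have a2: "(\<Sum>i\<in>{i. i < k \<and> X (\<sigma> k) \<in> PP ! i \<inter> S}. w i) \<le> sum w ({..<k} - {k - 1})"
    by (rule sum_sub_le[OF _ s2]) (use nn' in auto)
  have a3: "(\<Sum>i\<in>{i. i < k \<and> X (\<sigma> (k - 1)) \<in> PP ! i \<inter> S}. w i) \<le> sum w ({..<k} - {k - 2})"
    by (rule sum_sub_le[OF _ s3]) (use nn' in auto)
  have a2': "sum w ({..<k} - {k - 1}) = sum w {..<k} - w (k - 1)" using k3 by (simp add: sum_diff1)
  have a3': "sum w ({..<k} - {k - 2}) = sum w {..<k} - w (k - 2)" using k3 by (simp add: sum_diff1)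
  show "3 / 2 \<le> (\<Sum>i<length PP. w i)" using f1 f2 f3 a1 a1' a2 a2' a3 a3' len by simp
qed

lemma td_lb:
  assumes d: "is_tree_decomp PP N E B"
  shows "3 / 2 \<le> td_width PP N B"
proof -
  have t: "is_tree N E" and Bq: "\<forall>t\<in>N. B t \<subseteq> qvars PP"
    and cov: "\<forall>e\<in>set PP. \<exists>t\<in>N. e \<subseteq> B t"
    and con: "\<And>x. connected_in E {t \<in> N. x \<in> B t}"
    using d unfolding is_tree_decomp_def by blast+
  have fN: "finite N" using t unfolding is_tree_def by auto
  have k1: "k - 1 < k" "k - 2 < k" "0 < k" using k3 by auto
  have mem: "k \<in> {1..k}" "k - 1 \<in> {1..k}" "1 \<in> {1..k}" using k3 by auto
  have skk: "\<sigma> k \<noteq> \<sigma> (k - 1)" "\<sigma> 1 \<noteq> \<sigma> k" "\<sigma> 1 \<noteq> \<sigma> (k - 1)"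
  proof -
    show "\<sigma> k \<noteq> \<sigma> (k - 1)"
    proof
      assume "\<sigma> k = \<sigma> (k - 1)" hence "k = k - 1" by (rule sig_inj[OF mem(1) mem(2)])
      thus False using k3 by simp
    qed
    show "\<sigma> 1 \<noteq> \<sigma> k"
    proof
      assume "\<sigma> 1 = \<sigma> k" hence "1 = k" by (rule sig_inj[OF mem(3) mem(1)])
      thus False using k3 by simp
    qed
    show "\<sigma> 1 \<noteq> \<sigma> (k - 1)"
    proof
      assume "\<sigma> 1 = \<sigma> (k - 1)" hence "1 = k - 1" by (rule sig_inj[OF mem(3) mem(2)])
      thus False using k3 by simp
    qed
  qed
  have sin: "\<sigma> k \<in> {1..k}" "\<sigma> (k - 1) \<in> {1..k}" using sig_in k3 by auto
  have kk: "k - 2 + 1 = k - 1" "k - 1 + 1 = k" using k3 by auto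
  have at1: "Z (k - 1) \<in> PP ! (k - 2)" "X (\<sigma> k) \<in> PP ! (k - 2)"
    using Zmem[OF k1(2)] Xmem[OF k1(2)] kk skk sin k3 by auto
  have at2: "Z (k - 1) \<in> PP ! (k - 1)" "X (\<sigma> (k - 1)) \<in> PP ! (k - 1)"
    using Zmem[OF k1(1)] Xmem[OF k1(1)] kk skk sin k3 by auto
  have at3: "X (\<sigma> k) \<in> PP ! 0" "X (\<sigma> (k - 1)) \<in> PP ! 0"
    using Xmem[OF k1(3)] skk sin by auto
  have inset: "PP ! i \<in> set PP" if "i < k" for i using nth_mem[of i PP] len that by auto
  obtain t1 where t1: "t1 \<in> N" "PP ! (k - 2) \<subseteq> B t1" using cov inset[OF k1(2)] by blast
  obtain t2 where t2: "t2 \<in> N" "PP ! (k - 1) \<subseteq> B t2" using cov inset[OF k1(1)] by blast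
  obtain t3 where t3: "t3 \<in> N" "PP ! 0 \<subseteq> B t3" using cov inset[OF k1(3)] by blast
  let ?T1 = "{t \<in> N. Z (k - 1) \<in> B t}"
  let ?T2 = "{t \<in> N. X (\<sigma> k) \<in> B t}"
  let ?T3 = "{t \<in> N. X (\<sigma> (k - 1)) \<in> B t}"
  have "?T1 \<inter> ?T2 \<noteq> {}" using t1 at1 by blast
  moreover have "?T1 \<inter> ?T3 \<noteq> {}" using t2 at2 by blast
  moreover have "?T2 \<inter> ?T3 \<noteq> {}" using t3 at3 by blast
  ultimately have "?T1 \<inter> ?T2 \<inter> ?T3 \<noteq> {}"
    using helly3[OF t _ _ _ con con con] by blast
  then obtain t where tt: "t \<in> N" "Z (k - 1) \<in> B t" "X (\<sigma> k) \<in> B t" "X (\<sigma> (k - 1)) \<in> B t"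
    by blast
  have "3 / 2 \<le> frac_edge_cover PP (B t)"
    using fec_three[OF _ tt(2-4)] Bq tt(1) by blast
  also have "\<dots> \<le> td_width PP N B"
    unfolding td_width_def using fN tt(1) by (intro Max_ge) auto
  finally show ?thesis .
qed

end


lemma conn01: "S \<subseteq> {0, 1} \<Longrightarrow> connected_in {(0::nat, 1)} S"
  unfolding connected_in_def
proof (intro ballI)
  fix a b assume S: "S \<subseteq> {0, 1}" and ab: "a \<in> S" "b \<in> S"
  show "(a, b) \<in> (adj_in {(0, 1)} S)\<^sup>*"
  proof (cases "a = b")
    case True thus ?thesis by simp
  next
    case False
    hence "(a, b) \<in> adj_in {(0, 1)} S" using S ab unfolding adj_in_def by auto
    thus ?thesis by (rule r_into_rtrancl)
  qed
qed

lemma tree01: "is_tree {0::nat, 1} {(0, 1)}"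
proof -
  have "{{a, b} | a b. (a, b) \<in> {(0::nat, 1::nat)}} = {{0, 1}}" by auto
  thus ?thesis unfolding is_tree_def using conn01[of "{0, 1}"] by simp
qed

context
  fixes k :: nat and \<sigma> :: "nat \<Rightarrow> nat"
  assumes k3: "k \<ge> 3" and perm: "\<sigma> permutes {1..k}"
begin

definition "B0 = {X j | j. j \<in> {1..k}} \<union> {Z j | j. j \<in> {1..k - 1}}"
definition "Bf = (\<lambda>t::nat. if t = 0 then B0 else PP k \<sigma> ! (k - 1))"

lemma decomp: "is_tree_decomp (PP k \<sigma>) {0, 1} {(0, 1)} Bf"
  unfolding is_tree_decomp_def
proof (intro conjI allI ballI)
  show "is_tree {0, 1} {(0::nat, 1::nat)}" using tree01 by simp
next
  fix x show "connected_in {(0, 1)} {t \<in> {0, 1}. x \<in> Bf t}" by (rule conn01) auto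
next
  have k1: "k - 1 < k" using k3 by simp
  fix t assume "t \<in> {0::nat, 1}"
  show "Bf t \<subseteq> qvars (PP k \<sigma>)"
  proof (cases "t = 0")
    case True
    have "B0 \<subseteq> qvars (PP k \<sigma>)"
      unfolding B0_def using X_in_q[OF k3 perm] Z_in_q[OF k3 perm] by auto
    thus ?thesis using True unfolding Bf_def by simp
  next
    case False
    thus ?thesis unfolding Bf_def using inQ[OF k3 perm k1] by auto
  qed
next
  fix e assume "e \<in> set (PP k \<sigma>)"
  then obtain i where i: "i < k" "e = PP k \<sigma> ! i"
    using len[OF k3 perm] by (auto simp: in_set_conv_nth)
  show "\<exists>t\<in>{0, 1}. e \<subseteq> Bf t"
  proof (cases "i = k - 1")
    case True thus ?thesis using i unfolding Bf_def by auto
  next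
    case False
    have "e \<subseteq> B0"
    proof
      fix x assume x: "x \<in> e"
      show "x \<in> B0"
      proof (cases x)
        case (X j) thus ?thesis using x i Xmem[OF k3 perm i(1)] unfolding B0_def by auto
      next
        case (Z j)
        hence "1 \<le> j" "j \<le> i + 1" using x i Zmem[OF k3 perm i(1)] by auto
        thus ?thesis using Z False i(1) unfolding B0_def by auto
      qed
    qed
    thus ?thesis unfolding Bf_def by auto
  qed
qed

lemma fec_B1: "frac_edge_cover (PP k \<sigma>) (PP k \<sigma> ! (k - 1)) \<le> 3 / 2"
proof -
  define w :: "nat \<Rightarrow> real" where "w = (\<lambda>i. if i = k - 1 then 1 else 0)"
  have L: "length (PP k \<sigma>) = k" using len[OF k3 perm] .
  have "frac_edge_cover (PP k \<sigma>) (PP k \<sigma> ! (k - 1)) \<le> (\<Sum>i<length (PP k \<sigma>). w i)"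
  proof (rule fec_ub)
    show "\<forall>i<length (PP k \<sigma>). 0 \<le> w i" unfolding w_def by simp
    show "\<forall>x\<in>PP k \<sigma> ! (k - 1). 1 \<le> (\<Sum>i\<in>{i. i < length (PP k \<sigma>) \<and> x \<in> PP k \<sigma> ! i \<inter> PP k \<sigma> ! (k - 1)}. w i)"
    proof
      fix x assume x: "x \<in> PP k \<sigma> ! (k - 1)"
      let ?I = "{i. i < length (PP k \<sigma>) \<and> x \<in> PP k \<sigma> ! i \<inter> PP k \<sigma> ! (k - 1)}"
      have "k - 1 \<in> ?I" using x L k3 by auto
      hence "sum w {k - 1} \<le> sum w ?I" by (intro sum_mono2) (auto simp: w_def)
      thus "1 \<le> sum w ?I" unfolding w_def by simp
    qed
  qed
  also have "\<dots> = 1" unfolding L w_def using k3 by (simp add: sum.delta)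
  finally show ?thesis by simp
qed

lemma fec_B0: "frac_edge_cover (PP k \<sigma>) B0 \<le> 3 / 2"
proof -
  define w :: "nat \<Rightarrow> real" where "w = (\<lambda>i. if i \<in> {0, k - 2, k - 1} then 1 / 2 else 0)"
  have L: "length (PP k \<sigma>) = k" using len[OF k3 perm] .
  have k1: "k - 1 < k" "k - 2 < k" "0 < k" using k3 by auto
  have kk: "k - 2 + 1 = k - 1" "k - 1 + 1 = k" using k3 by auto
  have mem: "k \<in> {1..k}" "k - 1 \<in> {1..k}" "1 \<in> {1..k}" using k3 by auto
  have skk: "\<sigma> k \<noteq> \<sigma> (k - 1)" "\<sigma> 1 \<noteq> \<sigma> k" "\<sigma> 1 \<noteq> \<sigma> (k - 1)"
  proof -
    show "\<sigma> k \<noteq> \<sigma> (k - 1)"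
    proof
      assume "\<sigma> k = \<sigma> (k - 1)" hence "k = k - 1" by (rule sig_inj[OF k3 perm mem(1) mem(2)])
      thus False using k3 by simp
    qed
    show "\<sigma> 1 \<noteq> \<sigma> k"
    proof
      assume "\<sigma> 1 = \<sigma> k" hence "1 = k" by (rule sig_inj[OF k3 perm mem(3) mem(1)])
      thus False using k3 by simp
    qed
    show "\<sigma> 1 \<noteq> \<sigma> (k - 1)"
    proof
      assume "\<sigma> 1 = \<sigma> (k - 1)" hence "1 = k - 1" by (rule sig_inj[OF k3 perm mem(3) mem(2)])
      thus False using k3 by simp
    qed
  qed
  have wn: "\<And>i. 0 \<le> w i" unfolding w_def by simp
  have d: "0 \<noteq> k - 2" "0 \<noteq> k - 1" "k - 2 \<noteq> k - 1" using k3 by auto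
  have "frac_edge_cover (PP k \<sigma>) B0 \<le> (\<Sum>i<length (PP k \<sigma>). w i)"
  proof (rule fec_ub)
    show "\<forall>i<length (PP k \<sigma>). 0 \<le> w i" using wn by simp
    show "\<forall>x\<in>B0. 1 \<le> (\<Sum>i\<in>{i. i < length (PP k \<sigma>) \<and> x \<in> PP k \<sigma> ! i \<inter> B0}. w i)"
    proof
      fix x assume x: "x \<in> B0"
      let ?I = "{i. i < length (PP k \<sigma>) \<and> x \<in> PP k \<sigma> ! i \<inter> B0}"
      have fI: "finite ?I" by simp
      have pair: "1 \<le> sum w ?I" if "a \<in> ?I" "b \<in> ?I" "a \<noteq> b" "a \<in> {0, k - 2, k - 1}" "b \<in> {0, k - 2, k - 1}" for a b
      proof -
        have "w a + w b \<le> sum w ?I" by (rule sum_two_le[OF fI that(1-3)]) (rule wn)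
        moreover have "w a = 1 / 2" "w b = 1 / 2" unfolding w_def using that(4,5) by auto
        ultimately show ?thesis by simp
      qed
      show "1 \<le> sum w ?I"
      proof (cases x)
        case (Z j)
        hence j: "1 \<le> j" "j \<le> k - 1" using x unfolding B0_def by auto
        have "k - 2 \<in> ?I" using Zmem[OF k3 perm k1(2), of j] j kk Z x L k1 by auto
        moreover have "k - 1 \<in> ?I" using Zmem[OF k3 perm k1(1), of j] j kk Z x L k1 by auto
        ultimately show ?thesis using pair d by auto
      next
        case (X j)
        hence j: "1 \<le> j" "j \<le> k" using x unfolding B0_def by auto
        have I0: "0 \<in> ?I" if "j \<noteq> \<sigma> 1"
          using Xmem[OF k3 perm k1(3), of j] j X x L k1 that by auto
        have I1: "k - 1 \<in> ?I" if "j \<noteq> \<sigma> k"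
          using Xmem[OF k3 perm k1(1), of j] j X x L k1 that kk by auto
        have I2: "k - 2 \<in> ?I" if "j \<noteq> \<sigma> (k - 1)"
          using Xmem[OF k3 perm k1(2), of j] j X x L k1 that kk by auto
        show ?thesis
        proof (cases "j = \<sigma> 1")
          case True
          thus ?thesis using I1 I2 skk pair[of "k - 2" "k - 1"] d by auto
        next
          case False
          show ?thesis
          proof (cases "j = \<sigma> k")
            case True
            thus ?thesis using I0[OF False] I2 skk pair[of 0 "k - 2"] d by auto
          next
            case F2: False
            thus ?thesis using I0[OF False] I1[OF F2] pair[of 0 "k - 1"] d by auto
          qed
        qed
      qed
    qed
  qed
  also have "(\<Sum>i<length (PP k \<sigma>). w i) = 3 / 2"
  proof -
    have "(\<Sum>i<k. w i) = (\<Sum>i\<in>{0, k - 2, k - 1}. w i)"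
      by (rule sum.mono_neutral_right) (use k3 in \<open>auto simp: w_def\<close>)
    also have "\<dots> = 3 / 2" using d unfolding w_def by simp
    finally show ?thesis using L by simp
  qed
  finally show ?thesis .
qed

lemma comp_fhw: "fhw (PP k \<sigma>) = 3 / 2"
proof -
  let ?W = "{td_width (PP k \<sigma>) N B | N E B. is_tree_decomp (PP k \<sigma>) N E B}"
  have lb: "\<And>y. y \<in> ?W \<Longrightarrow> 3 / 2 \<le> y" using td_lb[OF k3 perm] by blast
  have mem: "td_width (PP k \<sigma>) {0, 1} Bf \<in> ?W" using decomp by blast
  have ub: "td_width (PP k \<sigma>) {0, 1} Bf \<le> 3 / 2"
    unfolding td_width_def Bf_def using fec_B0 fec_B1 by simp
  have "Inf ?W \<le> 3 / 2"
    using cInf_lower[OF mem] ub lb by (meson bdd_belowI order_trans)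
  moreover have "3 / 2 \<le> Inf ?W" using mem lb by (intro cInf_greatest) auto
  ultimately show ?thesis unfolding fhw_def by simp
qed

end

theorem mainTheorem9:
  fixes k :: nat
  assumes "k \<ge> 3"
  shows "fhw_union (mv_extension k (LW_atom k)) = 3 / 2"
proof -
  have "fhw ` mv_extension k (LW_atom k) = {3 / 2}"
  proof
    show "fhw ` mv_extension k (LW_atom k) \<subseteq> {3 / 2}"
      unfolding mv_extension_def using comp_fhw[OF assms] by auto
    have "mv_component k (LW_atom k) id \<in> mv_extension k (LW_atom k)"
      unfolding mv_extension_def using permutes_id by blast
    thus "{3 / 2} \<subseteq> fhw ` mv_extension k (LW_atom k)"
      using comp_fhw[OF assms permutes_id] by force
  qed
  thus ?thesis unfolding fhw_union_def by simp
qed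

end
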